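(* Fix constants $\alpha>0$ and $k'>0$. For each $n$ let $m=\alpha n$ (assumed integer) and let $\mathbf{h_1},\dots,\mathbf{h_n}\in\mathbb{R}^m$ be independent with i.i.d. $\mathcal{N}(0,1)$ entries. Then there exist $n_0$ and $a>0$ such that for all $n>n_0$, every integer $i$ with $k'n<i\le n$, and all deterministic coefficients $c_1,\dots,c_n$ with $c_j\in[1,2]$ for $j\le i$ and $c_j\in[0,1]$ for $j>i$, \[P\Big(\Big\|\sum_{j=1}^n c_j\mathbf{h_j}\Big\|_2^2<a\,n\log n\Big)\le \exp(-a\,n\log n).\] *)

theory Defs
  imports "HOL-Probability.Probability"
begin

definition std_gaussian :: "real measure" where
  "std_gaussian = density lborel std_normal_density"

text \<open>Joint law of h_1,...,h_n in R^m with i.i.d. N(0,1) entries: an outcome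
  is a function w with w (j, r) the r-th coordinate of h_j (1 <= j <= n, 1 <= r <= m).\<close>
definition gaussian_vectors :: "nat \<Rightarrow> nat \<Rightarrow> (nat \<times> nat \<Rightarrow> real) measure" where
  "gaussian_vectors n m = PiM ({1..n} \<times> {1..m}) (\<lambda>_. std_gaussian)"

end

theory Submission
  imports Defs
begin

lemma sets_std_gaussian[measurable_cong]: "sets std_gaussian = sets borel"
  by (simp add: std_gaussian_def)

lemma space_std_gaussian: "space std_gaussian = UNIV"
  by (simp add: std_gaussian_def)

lemma prob_space_std_gaussian: "prob_space std_gaussian"
  unfolding std_gaussian_def by (rule prob_space_normal_density) simp

lemma prob_space_G: "finite D \<Longrightarrow> prob_space (PiM D (\<lambda>_. std_gaussian))"
  by (intro prob_space_PiM prob_space_std_gaussian)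

lemma indep_coord:
  assumes D: "finite D" and e: "inj_on e J" "e \<in> J \<rightarrow> D" and J: "J \<noteq> {}"
  shows "prob_space.indep_vars (PiM D (\<lambda>_. std_gaussian)) (\<lambda>_. std_gaussian) (\<lambda>j w. w (e j)) J"
proof -
  interpret prob_space "PiM D (\<lambda>_. std_gaussian)" using prob_space_G[OF D] .
  have rv: "random_variable std_gaussian (\<lambda>w. w (e j))" if "j \<in> J" for j
    using e that by (auto intro!: measurable_component_singleton)
  have comp: "distr (PiM D (\<lambda>_. std_gaussian)) std_gaussian (\<lambda>w. w (e j)) = std_gaussian" if "j \<in> J" for j
    using e that by (intro distr_PiM_component prob_space_std_gaussian) auto
  show ?thesis
  proof (subst indep_vars_iff_distr_eq_PiM'[OF J rv])
    show "distr (PiM D (\<lambda>_. std_gaussian)) (\<Pi>\<^sub>M i\<in>J. std_gaussian) (\<lambda>x. \<lambda>i\<in>J. x (e i)) =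
      (\<Pi>\<^sub>M i\<in>J. distr (PiM D (\<lambda>_. std_gaussian)) std_gaussian (\<lambda>x. x (e i)))"
      using distr_PiM_reindex[of D "\<lambda>_. std_gaussian" e J] prob_space_std_gaussian e comp
      by (simp cong: PiM_cong)
  qed simp
qed

lemma coord_distributed:
  assumes D: "finite D" and x: "x \<in> D"
  shows "distributed (PiM D (\<lambda>_. std_gaussian)) lborel (\<lambda>w. w x) std_normal_density"
proof -
  have "distr (PiM D (\<lambda>_. std_gaussian)) lborel (\<lambda>w. w x) = distr (PiM D (\<lambda>_. std_gaussian)) std_gaussian (\<lambda>w. w x)"
    by (rule distr_cong) (auto simp: std_gaussian_def)
  also have "\<dots> = std_gaussian"
    using x by (intro distr_PiM_component prob_space_std_gaussian) auto
  finally show ?thesis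
    unfolding distributed_def using x
    by (auto simp: std_gaussian_def intro!: measurable_component_singleton)
qed


lemma Y_normal:
  assumes D: "finite D" and J: "finite J" "J \<noteq> {}" and sub: "\<And>j. j \<in> J \<Longrightarrow> (j, r) \<in> D"
    and c: "\<And>j. j \<in> J \<Longrightarrow> c j \<noteq> (0::real)"
  shows "distributed (PiM D (\<lambda>_. std_gaussian)) lborel (\<lambda>w. \<Sum>j\<in>J. c j * w (j, r))
           (normal_density 0 (sqrt (\<Sum>j\<in>J. (c j)\<^sup>2)))"
proof -
  interpret prob_space "PiM D (\<lambda>_. std_gaussian)" using prob_space_G[OF D] .
  have ind0: "indep_vars (\<lambda>_. std_gaussian) (\<lambda>j w. w ((\<lambda>j. (j, r)) j)) J"
    by (rule indep_coord[OF D _ _ J(2)]) (auto simp: inj_on_def sub)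
  have ind: "indep_vars (\<lambda>_. borel) (\<lambda>j w. c j * w (j, r)) J"
    using indep_vars_compose2[OF ind0, of "\<lambda>j x. c j * x" "\<lambda>_. borel"] by simp
  have dist: "distributed (PiM D (\<lambda>_. std_gaussian)) lborel (\<lambda>w. c j * w (j, r)) (normal_density 0 \<bar>c j\<bar>)"
    if "j \<in> J" for j
    using normal_density_affine[OF coord_distributed[OF D sub[OF that]], of "c j" 0] c[OF that] by simp
  have "distributed (PiM D (\<lambda>_. std_gaussian)) lborel (\<lambda>w. \<Sum>j\<in>J. c j * w (j, r))
           (normal_density (\<Sum>j\<in>J. 0) (sqrt (\<Sum>j\<in>J. \<bar>c j\<bar>\<^sup>2)))"
    by (rule sum_indep_normal[OF J ind]) (use c dist in auto)
  then show ?thesis by simp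
qed

lemma gauss_mgf:
  assumes s: "\<sigma> > 0" and l: "l \<ge> 0"
  shows "(\<integral>\<^sup>+y. ennreal (normal_density 0 \<sigma> y) * ennreal (exp (- l * y\<^sup>2)) \<partial>lborel)
     = ennreal (1 / sqrt (1 + 2 * l * \<sigma>\<^sup>2))"
proof -
  define q where "q = sqrt (1 + 2 * l * \<sigma>\<^sup>2)"
  have q: "q > 0" "q\<^sup>2 = 1 + 2 * l * \<sigma>\<^sup>2" using s l by (auto simp: q_def add_pos_nonneg)
  define t where "t = \<sigma> / q"
  have t: "t > 0" using s q by (simp add: t_def)
  have pt: "normal_density 0 \<sigma> y * exp (- l * y\<^sup>2) = (1/q) * normal_density 0 t y" for y
  proof -
    have a: "sqrt (2 * pi * \<sigma>\<^sup>2) = sqrt (2*pi) * \<sigma>" using s by (simp add: real_sqrt_mult)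
    have b: "sqrt (2 * pi * t\<^sup>2) = sqrt (2*pi) * t" using t by (simp add: real_sqrt_mult)
    have e: "- (y - 0)\<^sup>2 / (2 * \<sigma>\<^sup>2) + - l * y\<^sup>2 = - (y - 0)\<^sup>2 / (2 * t\<^sup>2)"
      using s q by (simp add: t_def field_simps power2_eq_square)
    have ex: "exp (- (y - 0)\<^sup>2 / (2 * \<sigma>\<^sup>2)) * exp (- l * y\<^sup>2) = exp (- (y - 0)\<^sup>2 / (2 * t\<^sup>2))"
      by (simp only: mult_exp_exp e)
    have "normal_density 0 \<sigma> y * exp (- l * y\<^sup>2) = 1 / (sqrt (2*pi) * \<sigma>) * exp (- (y - 0)\<^sup>2 / (2 * t\<^sup>2))"
      unfolding normal_density_def a by (simp only: mult.assoc ex)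
    also have "\<dots> = (1/q) * normal_density 0 t y"
      unfolding normal_density_def b using q s by (simp add: t_def field_simps)
    finally show ?thesis .
  qed
  have "(\<integral>\<^sup>+y. ennreal (normal_density 0 \<sigma> y) * ennreal (exp (- l * y\<^sup>2)) \<partial>lborel)
      = (\<integral>\<^sup>+y. ennreal (1/q) * ennreal (normal_density 0 t y) \<partial>lborel)"
  proof (intro nn_integral_cong)
    fix y
    have "ennreal (normal_density 0 \<sigma> y) * ennreal (exp (- l * y\<^sup>2)) = ennreal (normal_density 0 \<sigma> y * exp (- l * y\<^sup>2))"
      by (simp add: ennreal_mult')
    also have "\<dots> = ennreal ((1/q) * normal_density 0 t y)" by (simp only: pt)
    also have "\<dots> = ennreal (1/q) * ennreal (normal_density 0 t y)"
      using q by (intro ennreal_mult) auto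
    finally show "ennreal (normal_density 0 \<sigma> y) * ennreal (exp (- l * y\<^sup>2)) = ennreal (1/q) * ennreal (normal_density 0 t y)" .
  qed
  also have "\<dots> = ennreal (1/q) * (\<integral>\<^sup>+y. ennreal (normal_density 0 t y) \<partial>lborel)"
    by (rule nn_integral_cmult) simp
  also have "(\<integral>\<^sup>+y. ennreal (normal_density 0 t y) \<partial>lborel) = 1"
    by (subst nn_integral_eq_integral) (use t in auto)
  finally show ?thesis by (simp add: q_def)
qed


lemma main_bound:
  fixes n m :: nat and c :: "nat \<Rightarrow> real" and l T :: real
  defines "D \<equiv> {1..n} \<times> {1..m}"
  assumes J: "finite J" "J \<noteq> {}" "J \<subseteq> {1..n}" and c: "\<And>j. j \<in> J \<Longrightarrow> c j \<noteq> 0"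
    and m: "m \<ge> 1" and l: "l > 0"
  shows "measure (PiM D (\<lambda>_. std_gaussian))
           {w \<in> space (PiM D (\<lambda>_. std_gaussian)). (\<Sum>r\<in>{1..m}. (\<Sum>j\<in>J. c j * w (j, r))\<^sup>2) \<le> T}
         \<le> exp (l * T) * (1 / sqrt (1 + 2 * l * (\<Sum>j\<in>J. (c j)\<^sup>2))) ^ m"
proof -
  define M where "M = PiM D (\<lambda>_. std_gaussian)"
  have D: "finite D" "D \<noteq> {}" using m J by (auto simp: D_def)
  interpret prob_space M unfolding M_def using prob_space_G[OF D(1)] .
  define Y where "Y r w = (\<Sum>j\<in>J. c j * w (j, r))" for r and w :: "nat \<times> nat \<Rightarrow> real"
  define s2 where "s2 = (\<Sum>j\<in>J. (c j)\<^sup>2)"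
  have s2: "s2 > 0" unfolding s2_def using J c by (intro sum_pos) auto
  define q where "q = 1 / sqrt (1 + 2 * l * s2)"
  have q: "q \<ge> 0" using s2 l by (simp add: q_def)
  have Ymeas: "Y r \<in> borel_measurable M" if r: "r \<in> {1..m}" for r
    unfolding Y_def M_def
    by (intro borel_measurable_sum borel_measurable_times borel_measurable_const)
       (rule measurable_compose[OF measurable_component_singleton[of "(_,r)"]], use J r in \<open>auto simp: D_def\<close>)
  define S where "S w = (\<Sum>r\<in>{1..m}. (Y r w)\<^sup>2)" for w
  have Smeas: "S \<in> borel_measurable M"
    unfolding S_def by (intro borel_measurable_sum borel_measurable_power Ymeas)
  have indep: "indep_vars (\<lambda>_. borel) (\<lambda>r w. exp (- l * (Y r w)\<^sup>2)) {1..m}"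
  proof -
    have ind0: "indep_vars (\<lambda>_. std_gaussian) (\<lambda>x w. w (id x)) D"
      unfolding M_def by (rule indep_coord[OF D(1) _ _ D(2)]) auto
    have ind1: "indep_vars (\<lambda>r. PiM ({1..n} \<times> {r}) (\<lambda>_. std_gaussian))
        (\<lambda>r w. restrict (\<lambda>x. w (id x)) ({1..n} \<times> {r})) {1..m}"
      by (rule indep_vars_restrict[OF ind0]) (auto simp: D_def disjoint_family_on_def)
    have ind2: "indep_vars (\<lambda>_. borel) (\<lambda>r w. (\<lambda>f. exp (- l * (\<Sum>j\<in>J. c j * f (j, r))\<^sup>2))
         (restrict (\<lambda>x. w (id x)) ({1..n} \<times> {r}))) {1..m}"
    proof (rule indep_vars_compose2[OF ind1])
      fix r assume r: "r \<in> {1..m}"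
      show "(\<lambda>f. exp (- l * (\<Sum>j\<in>J. c j * f (j, r))\<^sup>2)) \<in> borel_measurable (PiM ({1..n} \<times> {r}) (\<lambda>_. std_gaussian))"
      proof -
        have comp: "(\<lambda>f. f (j,r)) \<in> borel_measurable (PiM ({1..n} \<times> {r}) (\<lambda>_. std_gaussian))" if "j \<in> J" for j
          using measurable_component_singleton[of "(j,r)" "{1..n} \<times> {r}" "\<lambda>_. std_gaussian"] that J
          by (auto simp: measurable_cong_sets[OF refl sets_std_gaussian])
        have "(\<lambda>f. (\<Sum>j\<in>J. c j * f (j, r))) \<in> borel_measurable (PiM ({1..n} \<times> {r}) (\<lambda>_. std_gaussian))"
          by (intro borel_measurable_sum borel_measurable_times borel_measurable_const comp)
        then show ?thesis by measurable
      qed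
    qed
    moreover have "(\<lambda>r w. (\<lambda>f. exp (- l * (\<Sum>j\<in>J. c j * f (j, r))\<^sup>2))
         (restrict (\<lambda>x. w (id x)) ({1..n} \<times> {r}))) = (\<lambda>r w. exp (- l * (Y r w)\<^sup>2))"
    proof (intro ext)
      fix r w
      have "(\<Sum>j\<in>J. c j * restrict (\<lambda>x. w (id x)) ({1..n} \<times> {r}) (j, r)) = Y r w"
        unfolding Y_def using J by (intro sum.cong) auto
      then show "(\<lambda>f. exp (- l * (\<Sum>j\<in>J. c j * f (j, r))\<^sup>2)) (restrict (\<lambda>x. w (id x)) ({1..n} \<times> {r}))
          = exp (- l * (Y r w)\<^sup>2)" by simp
    qed
    ultimately show "indep_vars (\<lambda>_. borel) (\<lambda>r w. exp (- l * (Y r w)\<^sup>2)) {1..m}" by simp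
  qed
  have "emeasure M {w \<in> space M. S w \<le> T} \<le>
     ennreal (exp (l * T)) * (\<integral>\<^sup>+w. ennreal (exp (- l * S w)) * indicator (space M) w \<partial>M)"
    by (rule Chernoff_ineq_nn_integral_le[OF l sets.top Smeas])
  also have "(\<integral>\<^sup>+w. ennreal (exp (- l * S w)) * indicator (space M) w \<partial>M)
     = (\<integral>\<^sup>+w. ennreal (\<Prod>r\<in>{1..m}. exp (- l * (Y r w)\<^sup>2)) \<partial>M)"
    by (intro nn_integral_cong) (simp add: S_def exp_sum sum_distrib_left)
  also have "(\<integral>\<^sup>+w. ennreal (\<Prod>r\<in>{1..m}. exp (- l * (Y r w)\<^sup>2)) \<partial>M) = (\<Prod>r\<in>{1..m}. (\<integral>\<^sup>+w. ennreal (exp (- l * (Y r w)\<^sup>2)) \<partial>M))"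
  proof -
    have indep': "indep_vars (\<lambda>_. borel) (\<lambda>r w. ennreal (exp (- l * (Y r w)\<^sup>2))) {1..m}"
      using indep_vars_compose2[OF indep, of "\<lambda>_ x. ennreal x" "\<lambda>_. borel"] by simp
    have "(\<integral>\<^sup>+w. ennreal (\<Prod>r\<in>{1..m}. exp (- l * (Y r w)\<^sup>2)) \<partial>M) = (\<integral>\<^sup>+w. (\<Prod>r\<in>{1..m}. ennreal (exp (- l * (Y r w)\<^sup>2))) \<partial>M)"
      by (simp add: prod_ennreal)
    also have "\<dots> = (\<Prod>r\<in>{1..m}. (\<integral>\<^sup>+w. ennreal (exp (- l * (Y r w)\<^sup>2)) \<partial>M))"
      using indep_vars_nn_integral[of "{1..m}" "\<lambda>r w. ennreal (exp (- l * (Y r w)\<^sup>2))"] indep' by simp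
    finally show ?thesis .
  qed
  also have "\<dots> = (\<Prod>r\<in>{1..m}. ennreal q)"
  proof (rule prod.cong[OF refl])
    fix r assume r: "r \<in> {1..m}"
    have dist: "distributed M lborel (Y r) (normal_density 0 (sqrt s2))"
      unfolding M_def Y_def s2_def
      by (rule Y_normal[OF D(1) J(1,2)]) (use J c r in \<open>auto simp: D_def\<close>)
    have "(\<integral>\<^sup>+w. ennreal (exp (- l * (Y r w)\<^sup>2)) \<partial>M) =
      (\<integral>\<^sup>+y. ennreal (normal_density 0 (sqrt s2) y) * ennreal (exp (- l * y\<^sup>2)) \<partial>lborel)"
      by (rule distributed_nn_integral[OF dist, symmetric]) simp
    also have "\<dots> = ennreal q"
      using gauss_mgf[of "sqrt s2" l] s2 l by (simp add: q_def)
    finally show "(\<integral>\<^sup>+w. ennreal (exp (- l * (Y r w)\<^sup>2)) \<partial>M) = ennreal q" .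
  qed
  also have "\<dots> = ennreal (q ^ m)"
    using q by (simp add: prod_ennreal ennreal_power)
  finally have "emeasure M {w \<in> space M. S w \<le> T} \<le> ennreal (exp (l * T) * q ^ m)"
    using q by (simp add: ennreal_mult')
  then have "measure M {w \<in> space M. S w \<le> T} \<le> exp (l * T) * q ^ m"
    using q by (simp add: emeasure_eq_measure ennreal_le_iff)
  then show ?thesis by (simp add: M_def S_def Y_def q_def s2_def)
qed

lemma arith_final:
  fixes n m :: nat and \<alpha> k' a s2 T :: real
  assumes n: "n \<ge> 1" and m: "real m = \<alpha> * real n" and al: "\<alpha> > 0" and k: "k' > 0"
    and a: "a = \<alpha> * k' / (2 * (k' + 1))" and s2: "s2 > k' * real n" and T: "T = a * real n * ln (real n)"
  shows "exp (real n / s2 * T) * (1 / sqrt (1 + 2 * real n)) ^ m \<le> exp (- a * real n * ln (real n))"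
proof -
  have ln0: "ln (real n) \<ge> 0" using n by simp
  have a0: "a > 0" using a al k by simp
  have T0: "T \<ge> 0" using T a0 ln0 by simp
  have kn: "k' * real n > 0" using k n by simp
  have s20: "s2 > 0" using s2 kn by linarith
  have "real n / s2 * T \<le> real n / (k' * real n) * T"
    using s2 kn T0 by (intro mult_right_mono divide_left_mono) auto
  also have "\<dots> = a / k' * real n * ln (real n)" using n k T by (simp add: field_simps)
  finally have e1: "real n / s2 * T \<le> a / k' * real n * ln (real n)" .
  have b: "1 / sqrt (1 + 2 * real n) \<le> exp (- ln (real n) / 2)"
  proof -
    have "exp (- ln (real n) / 2) = 1 / exp (ln (real n) / 2)" by (simp add: exp_minus field_simps)
    also have "exp (ln (real n) / 2) = sqrt (real n)"
      using n by (simp add: powr_half_sqrt[symmetric] powr_def)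
    finally have "exp (- ln (real n) / 2) = 1 / sqrt (real n)" .
    moreover have "1 / sqrt (1 + 2 * real n) \<le> 1 / sqrt (real n)"
      using n by (intro divide_left_mono) auto
    ultimately show ?thesis by simp
  qed
  have "(1 / sqrt (1 + 2 * real n)) ^ m \<le> exp (- ln (real n) / 2) ^ m"
    using b by (intro power_mono) auto
  also have "\<dots> = exp (real m * (- ln (real n) / 2))" by (simp only: exp_of_nat_mult)
  also have "\<dots> = exp (- \<alpha> / 2 * real n * ln (real n))" using m by (simp add: field_simps)
  finally have e2: "(1 / sqrt (1 + 2 * real n)) ^ m \<le> exp (- \<alpha> / 2 * real n * ln (real n))" .
  have "exp (real n / s2 * T) * (1 / sqrt (1 + 2 * real n)) ^ m \<le>
        exp (a / k' * real n * ln (real n)) * exp (- \<alpha> / 2 * real n * ln (real n))"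
    using e1 e2 by (intro mult_mono) auto
  also have "\<dots> = exp ((a / k' - \<alpha> / 2) * real n * ln (real n))"
    by (simp only: mult_exp_exp) (simp add: algebra_simps)
  also have "a / k' - \<alpha> / 2 = - a" using a k by (simp add: field_simps)
  finally show ?thesis by simp
qed


theorem lemma1:
  fixes \<alpha> k' :: real
  assumes "\<alpha> > 0" and "k' > 0"
  shows "\<exists>n0::nat. \<exists>a::real. a > 0 \<and>
    (\<forall>n m i :: nat. \<forall>c :: nat \<Rightarrow> real.
       n > n0 \<longrightarrow> real m = \<alpha> * real n \<longrightarrow>
       k' * real n < real i \<longrightarrow> i \<le> n \<longrightarrow>
       (\<forall>j\<in>{1..i}. 1 \<le> c j \<and> c j \<le> 2) \<longrightarrow>
       (\<forall>j\<in>{i<..n}. 0 \<le> c j \<and> c j \<le> 1) \<longrightarrow>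
       measure (gaussian_vectors n m)
         {w \<in> space (gaussian_vectors n m).
            (\<Sum>r\<in>{1..m}. (\<Sum>j\<in>{1..n}. c j * w (j, r))\<^sup>2) < a * real n * ln (real n)}
       \<le> exp (- a * real n * ln (real n)))"
proof (intro exI conjI allI impI)
  define a where "a = \<alpha> * k' / (2 * (k' + 1))"
  show "a > 0" using assms by (simp add: a_def)
  fix n m i :: nat and c :: "nat \<Rightarrow> real"
  assume n: "n > 0" and m: "real m = \<alpha> * real n" and ki: "k' * real n < real i" and i: "i \<le> n"
    and c1: "\<forall>j\<in>{1..i}. 1 \<le> c j \<and> c j \<le> 2" and c2: "\<forall>j\<in>{i<..n}. 0 \<le> c j \<and> c j \<le> 1"
  define T where "T = a * real n * ln (real n)"
  define J where "J = {j\<in>{1..n}. c j \<noteq> 0}"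
  define D where "D = {1..n} \<times> {1..m}"
  have n1: "n \<ge> 1" using n by simp
  have "real m > 0" using m assms n by simp
  then have m1: "m \<ge> 1" by simp
  have "real i > 0" using ki assms n by (smt (verit) mult_pos_pos of_nat_0_less_iff)
  then have i1: "i \<ge> 1" by simp
  have "c 1 \<ge> 1" using c1 i1 by auto
  then have "1 \<in> J" using n1 by (auto simp: J_def)
  then have J: "finite J" "J \<noteq> {}" "J \<subseteq> {1..n}" by (auto simp: J_def)
  have cJ: "\<And>j. j \<in> J \<Longrightarrow> c j \<noteq> 0" by (auto simp: J_def)
  define s2 where "s2 = (\<Sum>j\<in>J. (c j)\<^sup>2)"
  have "s2 = (\<Sum>j\<in>{1..n}. (c j)\<^sup>2)"
    unfolding s2_def J_def by (rule sum.mono_neutral_left) auto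
  also have "\<dots> \<ge> (\<Sum>j\<in>{1..i}. (c j)\<^sup>2)"
    using i by (intro sum_mono2) auto
  also have "(\<Sum>j\<in>{1..i}. (c j)\<^sup>2) \<ge> (\<Sum>j\<in>{1..i}. 1)"
  proof (intro sum_mono)
    fix j assume "j \<in> {1..i}"
    then have "1 \<le> c j" using c1 by auto
    then show "1 \<le> (c j)\<^sup>2" by (simp add: one_le_power)
  qed
  finally have s2i: "s2 \<ge> real i" by simp
  then have s2k: "s2 > k' * real n" using ki by linarith
  have s20: "s2 > 0" using s2i i1 by linarith
  define l where "l = real n / s2"
  have l: "l > 0" using s20 n by (simp add: l_def)
  have ls: "l * s2 = real n" using s20 by (simp add: l_def)
  have eqS: "(\<Sum>j\<in>{1..n}. c j * w (j, r)) = (\<Sum>j\<in>J. c j * w (j, r))" for w :: "nat \<times> nat \<Rightarrow> real" and r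
    unfolding J_def by (rule sum.mono_neutral_right) auto
  have GV: "gaussian_vectors n m = PiM D (\<lambda>_. std_gaussian)" by (simp add: gaussian_vectors_def D_def)
  interpret prob_space "PiM D (\<lambda>_. std_gaussian)" using prob_space_G[of D] by (simp add: D_def)
  have "measure (gaussian_vectors n m)
         {w \<in> space (gaussian_vectors n m). (\<Sum>r\<in>{1..m}. (\<Sum>j\<in>{1..n}. c j * w (j, r))\<^sup>2) < T}
      \<le> measure (PiM D (\<lambda>_. std_gaussian))
         {w \<in> space (PiM D (\<lambda>_. std_gaussian)). (\<Sum>r\<in>{1..m}. (\<Sum>j\<in>J. c j * w (j, r))\<^sup>2) \<le> T}"
  proof -
    have meas: "(\<lambda>w. (\<Sum>r\<in>{1..m}. (\<Sum>j\<in>J. c j * w (j, r))\<^sup>2)) \<in> borel_measurable (PiM D (\<lambda>_. std_gaussian))"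
    proof (intro borel_measurable_sum borel_measurable_power borel_measurable_times borel_measurable_const)
      fix r j assume "r \<in> {1..m}" "j \<in> J"
      then show "(\<lambda>w. w (j, r)) \<in> borel_measurable (PiM D (\<lambda>_. std_gaussian))"
        using measurable_component_singleton[of "(j,r)" D "\<lambda>_. std_gaussian"] J
        by (auto simp: D_def measurable_cong_sets[OF refl sets_std_gaussian])
    qed
    show ?thesis unfolding GV eqS
      by (intro finite_measure_mono) (use meas in auto)
  qed
  also have "\<dots> \<le> exp (l * T) * (1 / sqrt (1 + 2 * l * s2)) ^ m"
    unfolding D_def s2_def by (rule main_bound[OF J cJ m1 l])
  also have "\<dots> = exp (real n / s2 * T) * (1 / sqrt (1 + 2 * real n)) ^ m"
    using ls s20 by (simp add: l_def mult.assoc)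
  also have "\<dots> \<le> exp (- a * real n * ln (real n))"
    by (rule arith_final[OF n1 m assms a_def s2k T_def])
  finally show "measure (gaussian_vectors n m)
         {w \<in> space (gaussian_vectors n m).
            (\<Sum>r\<in>{1..m}. (\<Sum>j\<in>{1..n}. c j * w (j, r))\<^sup>2) < a * real n * ln (real n)}
       \<le> exp (- a * real n * ln (real n))" unfolding T_def .
qed

end
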